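(* Let $d\ge2$ and let $\mathbf{x}=(x_0,\dots,x_{d-1})\in\mathbb{R}^d$ with $x_i\ge 0$ for all $i$ and $\mathbf{x}\neq 0$. Define the operator on $\mathbb{C}^d\otimes\mathbb{C}^d$ $$I_{\mathbf{x}}=\frac{1}{\|\mathbf{x}\|_1^2}\left(\sum_{i=0}^{d-1}x_i^2\ket{ii}\bra{ii}+\sum_{0\le i<j<d}2x_ix_j\ket{D_{ij}}\bra{D_{ij}}\right),$$ where $\ket{D_{ij}}=(\ket{ij}+\ket{ji})/\sqrt2$ and $\|\mathbf{x}\|_1=\sum_i x_i$. Then $I_{\mathbf{x}}$ is a separable quantum state.
   Context: $\{\ket{0},\dots,\ket{d-1}\}$ denotes the computational basis of $\mathbb{C}^d$. A state is separable if it is a convex combination (possibly given by an integral over a probability measure) of product states $\rho^A\otimes\rho^B$. *)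

theory Defs
  imports "HOL-Analysis.Analysis"
begin

text \<open>Operators on the Hilbert space with orthonormal basis indexed by a finite set S
  are represented as matrices  'i => 'i => complex  (entries outside S are required to be 0).
  C^d has basis indexed by {..<d}; C^d (x) C^d has basis |ij> indexed by pairs (i,j).\<close>

definition density_on :: "'i set \<Rightarrow> ('i \<Rightarrow> 'i \<Rightarrow> complex) \<Rightarrow> bool" where
  "density_on S \<rho> \<longleftrightarrow>
     (\<forall>p q. p \<notin> S \<or> q \<notin> S \<longrightarrow> \<rho> p q = 0) \<and>
     (\<forall>p q. \<rho> q p = cnj (\<rho> p q)) \<and>
     (\<forall>v. Im (\<Sum>p\<in>S. \<Sum>q\<in>S. cnj (v p) * \<rho> p q * v q) = 0 \<and>
          Re (\<Sum>p\<in>S. \<Sum>q\<in>S. cnj (v p) * \<rho> p q * v q) \<ge> 0) \<and>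
     (\<Sum>p\<in>S. \<rho> p p) = 1"

definition tensor :: "(nat \<Rightarrow> nat \<Rightarrow> complex) \<Rightarrow> (nat \<Rightarrow> nat \<Rightarrow> complex)
    \<Rightarrow> (nat \<times> nat \<Rightarrow> nat \<times> nat \<Rightarrow> complex)" where
  "tensor \<rho> \<sigma> = (\<lambda>(i, k) (j, l). \<rho> i j * \<sigma> k l)"

definition separable :: "nat \<Rightarrow> (nat \<times> nat \<Rightarrow> nat \<times> nat \<Rightarrow> complex) \<Rightarrow> bool" where
  "separable d \<rho> \<longleftrightarrow>
     (\<exists>(n::nat) (w::nat \<Rightarrow> real) A B.
        (\<forall>k<n. w k \<ge> 0) \<and> (\<Sum>k<n. w k) = 1 \<and>
        (\<forall>k<n. density_on {..<d} (A k) \<and> density_on {..<d} (B k)) \<and>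
        \<rho> = (\<lambda>r s. \<Sum>k<n. complex_of_real (w k) * tensor (A k) (B k) r s))"

definition ket2 :: "nat \<Rightarrow> nat \<Rightarrow> nat \<times> nat \<Rightarrow> complex" where
  "ket2 i j = (\<lambda>(a, b). if a = i \<and> b = j then 1 else 0)"

definition Dket :: "nat \<Rightarrow> nat \<Rightarrow> nat \<times> nat \<Rightarrow> complex" where
  "Dket i j = (\<lambda>r. (ket2 i j r + ket2 j i r) / complex_of_real (sqrt 2))"

definition outer :: "('i \<Rightarrow> complex) \<Rightarrow> ('i \<Rightarrow> complex) \<Rightarrow> 'i \<Rightarrow> 'i \<Rightarrow> complex" where
  "outer u v = (\<lambda>p q. u p * cnj (v q))"

definition Iop :: "nat \<Rightarrow> (nat \<Rightarrow> real) \<Rightarrow> nat \<times> nat \<Rightarrow> nat \<times> nat \<Rightarrow> complex" where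
  "Iop d x = (\<lambda>r s. complex_of_real (1 / (\<Sum>i<d. x i)^2) *
      ((\<Sum>i<d. complex_of_real ((x i)^2) * outer (ket2 i i) (ket2 i i) r s)
     + (\<Sum>i<d. \<Sum>j\<in>{i<..<d}. complex_of_real (2 * x i * x j) * outer (Dket i j) (Dket i j) r s)))"

end

theory Submission
  imports Defs
begin

lemma qf_rank:
  fixes v :: "'i \<Rightarrow> complex" and u :: "'f \<Rightarrow> 'i \<Rightarrow> complex"
  assumes "finite S" "finite F"
  shows "(\<Sum>p\<in>S. \<Sum>q\<in>S. cnj (v p) * (\<Sum>f\<in>F. complex_of_real (w f) * (u f p * cnj (u f q))) * v q)
       = complex_of_real (\<Sum>f\<in>F. w f * (cmod (\<Sum>p\<in>S. cnj (v p) * u f p))^2)"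
proof -
  have "(\<Sum>p\<in>S. \<Sum>q\<in>S. cnj (v p) * (\<Sum>f\<in>F. complex_of_real (w f) * (u f p * cnj (u f q))) * v q)
     = (\<Sum>f\<in>F. complex_of_real (w f) * ((\<Sum>p\<in>S. cnj (v p) * u f p) * cnj (\<Sum>q\<in>S. cnj (v q) * u f q)))"
    by (simp add: sum_distrib_left sum_distrib_right sum_product sum.swap[of _ F] mult_ac)
  also have "\<dots> = (\<Sum>f\<in>F. complex_of_real (w f * (cmod (\<Sum>p\<in>S. cnj (v p) * u f p))^2))"
    by (intro sum.cong refl) (simp only: of_real_mult complex_norm_square)
  finally show ?thesis by simp
qed

lemma char4:
  fixes n m :: nat assumes "n \<le> 2" "m \<le> 2"
  shows "(\<Sum>t<4. \<i>^(t*n) * (-\<i>)^(t*m)) = (if n = m then 4 else 0)"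
proof -
  have n: "n = 0 \<or> n = 1 \<or> n = 2" and m: "m = 0 \<or> m = 1 \<or> m = 2" using assms by auto
  have e: "(\<Sum>t<4. g t) = g 0 + g 1 + g 2 + g (3::nat)" for g :: "nat \<Rightarrow> complex"
    by (simp add: numeral_eq_Suc)
  show ?thesis using n m by (auto simp: e power_mult_distrib power_mult[symmetric] numeral_eq_Suc)
qed

lemma charsum:
  fixes a b c e d :: nat
  assumes "a < d" "b < d" "c < d" "e < d"
  shows "(\<Sum>f\<in>PiE {..<d} (\<lambda>_. {..<4::nat}). \<i>^(f a) * \<i>^(f b) * cnj (\<i>^(f c)) * cnj (\<i>^(f e)))
     = (if (c = a \<and> e = b) \<or> (c = b \<and> e = a) then 4^d else 0)"
proof -
  define n where "n i = (of_bool (i = a) + of_bool (i = b) :: nat)" for i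
  define m where "m i = (of_bool (i = c) + of_bool (i = e) :: nat)" for i
  define h where "h i t = \<i>^(t*n i) * (-\<i>)^(t*m i)" for i t
  have tm: "\<i>^(f a) * \<i>^(f b) * cnj (\<i>^(f c)) * cnj (\<i>^(f e)) = (\<Prod>i<d. h i (f i))" for f :: "nat \<Rightarrow> nat"
  proof -
    have "(\<Sum>i<d. f i * n i) = (\<Sum>i<d. (if i = a then f i else 0)) + (\<Sum>i<d. if i = b then f i else 0)"
      proof -
        have "f i * n i = (if i = a then f i else 0) + (if i = b then f i else 0)" for i
          by (simp add: n_def)
        then show ?thesis by (simp add: sum.distrib)
      qed
    then have s1: "(\<Sum>i<d. f i * n i) = f a + f b" using assms by simp
    have "(\<Sum>i<d. f i * m i) = (\<Sum>i<d. (if i = c then f i else 0)) + (\<Sum>i<d. if i = e then f i else 0)"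
      proof -
        have "f i * m i = (if i = c then f i else 0) + (if i = e then f i else 0)" for i
          by (simp add: m_def)
        then show ?thesis by (simp add: sum.distrib)
      qed
    then have s2: "(\<Sum>i<d. f i * m i) = f c + f e" using assms by simp
    have "(\<Prod>i<d. h i (f i)) = (\<Prod>i<d. \<i>^(f i * n i)) * (\<Prod>i<d. (-\<i>)^(f i * m i))"
      by (simp add: h_def prod.distrib)
    also have "\<dots> = \<i>^(f a + f b) * (-\<i>)^(f c + f e)"
      by (simp add: power_sum[symmetric] s1 s2)
    finally show ?thesis by (simp add: power_add)
  qed
  have "(\<Sum>f\<in>PiE {..<d} (\<lambda>_. {..<4::nat}). \<i>^(f a) * \<i>^(f b) * cnj (\<i>^(f c)) * cnj (\<i>^(f e)))
      = (\<Sum>f\<in>PiE {..<d} (\<lambda>_. {..<4::nat}). \<Prod>i<d. h i (f i))"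
    by (intro sum.cong refl tm)
  also have "\<dots> = (\<Prod>i<d. \<Sum>t<4. h i t)"
    by (rule prod_sum_PiE[symmetric]) auto
  also have "\<dots> = (\<Prod>i<d. if n i = m i then 4 else 0)"
    by (intro prod.cong refl, unfold h_def, rule char4) (auto simp: n_def m_def of_bool_def split: if_splits)
  also have "\<dots> = (if \<forall>i<d. n i = m i then 4^d else 0)"
    by auto
  also have "(\<forall>i<d. n i = m i) \<longleftrightarrow> (c = a \<and> e = b) \<or> (c = b \<and> e = a)"
  proof
    assume H: "\<forall>i<d. n i = m i"
    have A: "n a = m a" "n b = m b" using H assms by auto
    show "(c = a \<and> e = b) \<or> (c = b \<and> e = a)"
    proof (cases "c = a")
      case True
      then have "e = b" using A(2) by (cases "b = a") (auto simp: n_def m_def of_bool_def split: if_splits)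
      then show ?thesis using True by simp
    next
      case False
      then have "e = a" using A(1) by (auto simp: n_def m_def of_bool_def split: if_splits)
      then have "c = b" using A(2) False by (cases "b = a") (auto simp: n_def m_def of_bool_def split: if_splits)
      then show ?thesis using \<open>e = a\<close> by simp
    qed
  qed (auto simp: n_def m_def of_bool_def split: if_splits)
  finally show ?thesis .
qed

lemma dd_sum:
  fixes y :: complex and d p q :: nat
  shows "(\<Sum>i<d. \<Sum>j\<in>{i<..<d}. if i = p \<and> j = q then y else 0) = (if p < q \<and> q < d then y else 0)"
proof -
  have "(\<Sum>j\<in>{i<..<d}. if i = p \<and> j = q then y else 0) = (if i = p then (if p < q \<and> q < d then y else 0) else 0)" for i
    by (cases "i = p") (auto simp: sum.delta)
  then show ?thesis by (simp add: sum.delta)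
qed

lemma Dterm_aux:
  fixes x :: "nat \<Rightarrow> real"
  assumes "i < j" and O: "zz = (ket2 i j (a,b) + ket2 j i (a,b)) * cnj (ket2 i j (c,e) + ket2 j i (c,e)) / 2"
  shows "complex_of_real (2 * x i * x j) * zz
   = (if i = a \<and> j = b then complex_of_real (x a * x b) * (of_bool (c = a \<and> e = b) + of_bool (c = b \<and> e = a)) else 0)
   + (if i = b \<and> j = a then complex_of_real (x a * x b) * (of_bool (c = a \<and> e = b) + of_bool (c = b \<and> e = a)) else 0)"
proof -
  have k: "ket2 p q (r, t) = complex_of_real (of_bool (r = p \<and> t = q))" for p q r t by (simp add: ket2_def)
  have zz: "zz = complex_of_real ((of_bool (a = i \<and> b = j) + of_bool (a = j \<and> b = i)) * (of_bool (c = i \<and> e = j) + of_bool (c = j \<and> e = i)) / 2)"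
    unfolding O k by (simp only: complex_cnj_add complex_cnj_complex_of_real of_real_add of_real_mult of_real_divide of_real_numeral)
  show ?thesis
  proof (cases "i = a \<and> j = b")
    case True
    then have ia: "i = a" and jb: "j = b" by auto
    have "a < b" using assms(1) ia jb by simp
    then show ?thesis unfolding zz ia jb by simp
  next
    case F1: False
    show ?thesis
    proof (cases "i = b \<and> j = a")
      case True
      then have ia: "i = b" and jb: "j = a" by auto
      have "b < a" using assms(1) ia jb by simp
      then show ?thesis unfolding zz ia jb by simp
    next
      case False
      have o1: "of_bool (a = i \<and> b = j) = (0::real)" "of_bool (a = j \<and> b = i) = (0::real)"
        using F1 False by auto
      have "zz = 0" unfolding zz o1 by simp
      then show ?thesis by (simp only: if_not_P[OF F1] if_not_P[OF False] mult_zero_right add_0)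
    qed
  qed
qed

lemma Dterm:
  fixes x :: "nat \<Rightarrow> real"
  assumes "i < j"
  shows "complex_of_real (2 * x i * x j) * outer (Dket i j) (Dket i j) (a, b) (c, e)
   = (if i = a \<and> j = b then complex_of_real (x a * x b) * (of_bool (c = a \<and> e = b) + of_bool (c = b \<and> e = a)) else 0)
   + (if i = b \<and> j = a then complex_of_real (x a * x b) * (of_bool (c = a \<and> e = b) + of_bool (c = b \<and> e = a)) else 0)"
proof -
  have s2: "complex_of_real (sqrt 2) * complex_of_real (sqrt 2) = 2"
  proof -
    have "complex_of_real (sqrt 2 * sqrt 2) = 2" by simp
    then show ?thesis by (simp only: of_real_mult)
  qed
  have "outer (Dket i j) (Dket i j) (a, b) (c, e) = (ket2 i j (a,b) + ket2 j i (a,b)) * cnj (ket2 i j (c,e) + ket2 j i (c,e)) / (complex_of_real (sqrt 2) * complex_of_real (sqrt 2))"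
    unfolding outer_def Dket_def by (simp only: complex_cnj_divide complex_cnj_complex_of_real times_divide_times_eq)
  then have "outer (Dket i j) (Dket i j) (a, b) (c, e) = (ket2 i j (a,b) + ket2 j i (a,b)) * cnj (ket2 i j (c,e) + ket2 j i (c,e)) / 2"
    by (simp only: s2)
  from Dterm_aux[OF assms this] show ?thesis .
qed

lemma Iop_entry:
  shows "Iop d x (a, b) (c, e) = complex_of_real (1 / (\<Sum>i<d. x i)^2) *
     (if a < d \<and> b < d \<and> c < d \<and> e < d \<and> ((c = a \<and> e = b) \<or> (c = b \<and> e = a))
      then complex_of_real (x a * x b) else 0)"
proof -
  define Y where "Y = complex_of_real (x a * x b) * (of_bool (c = a \<and> e = b) + of_bool (c = b \<and> e = a))"
  have S1: "(\<Sum>i<d. complex_of_real ((x i)^2) * outer (ket2 i i) (ket2 i i) (a, b) (c, e))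
     = (if a < d \<and> b = a \<and> c = a \<and> e = a then complex_of_real ((x a)^2) else 0)"
  proof -
    have "complex_of_real ((x i)^2) * outer (ket2 i i) (ket2 i i) (a, b) (c, e)
       = (if i = a then (if b = a \<and> c = a \<and> e = a then complex_of_real ((x a)^2) else 0) else 0)" for i
      by (auto simp: outer_def ket2_def)
    then show ?thesis by (simp add: sum.delta)
  qed
  have S2: "(\<Sum>i<d. \<Sum>j\<in>{i<..<d}. complex_of_real (2 * x i * x j) * outer (Dket i j) (Dket i j) (a, b) (c, e))
     = (if a < b \<and> b < d then Y else 0) + (if b < a \<and> a < d then Y else 0)"
  proof -
    have "(\<Sum>i<d. \<Sum>j\<in>{i<..<d}. complex_of_real (2 * x i * x j) * outer (Dket i j) (Dket i j) (a, b) (c, e))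
      = (\<Sum>i<d. \<Sum>j\<in>{i<..<d}. (if i = a \<and> j = b then Y else 0) + (if i = b \<and> j = a then Y else 0))"
      unfolding Y_def by (intro sum.cong refl Dterm) auto
    also have "\<dots> = (\<Sum>i<d. \<Sum>j\<in>{i<..<d}. (if i = a \<and> j = b then Y else 0)) + (\<Sum>i<d. \<Sum>j\<in>{i<..<d}. (if i = b \<and> j = a then Y else 0))"
      by (simp add: sum.distrib)
    finally show ?thesis by (simp only: dd_sum)
  qed
  have inner: "(if a < d \<and> b = a \<and> c = a \<and> e = a then complex_of_real ((x a)^2) else 0)
      + ((if a < b \<and> b < d then Y else 0) + (if b < a \<and> a < d then Y else 0))
      = (if a < d \<and> b < d \<and> c < d \<and> e < d \<and> ((c = a \<and> e = b) \<or> (c = b \<and> e = a))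
      then complex_of_real (x a * x b) else 0)"
  proof (cases a b rule: linorder_cases)
    case less
    then show ?thesis unfolding Y_def by (cases "c = a \<and> e = b"; cases "c = b \<and> e = a") auto
  next
    case equal
    then show ?thesis by (auto simp: power2_eq_square)
  next
    case greater
    then show ?thesis unfolding Y_def by (cases "c = a \<and> e = b"; cases "c = b \<and> e = a") auto
  qed
  show ?thesis
    unfolding Iop_def prod.case S1 S2 inner ..
qed

lemma density_rank:
  fixes u :: "'f \<Rightarrow> 'i \<Rightarrow> complex"
  assumes S: "finite S" and F: "finite F" and w: "\<forall>f\<in>F. w f \<ge> 0"
    and z: "\<forall>f p. p \<notin> S \<longrightarrow> u f p = 0"
    and tr: "(\<Sum>f\<in>F. w f * (\<Sum>p\<in>S. (cmod (u f p))^2)) = 1"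
  shows "density_on S (\<lambda>p q. \<Sum>f\<in>F. complex_of_real (w f) * (u f p * cnj (u f q)))"
proof -
  have psd: "Im (\<Sum>p\<in>S. \<Sum>q\<in>S. cnj (v p) * (\<Sum>f\<in>F. complex_of_real (w f) * (u f p * cnj (u f q))) * v q) = 0 \<and>
          Re (\<Sum>p\<in>S. \<Sum>q\<in>S. cnj (v p) * (\<Sum>f\<in>F. complex_of_real (w f) * (u f p * cnj (u f q))) * v q) \<ge> 0"
    for v :: "'i \<Rightarrow> complex"
  proof -
    have e: "(\<Sum>p\<in>S. \<Sum>q\<in>S. cnj (v p) * (\<Sum>f\<in>F. complex_of_real (w f) * (u f p * cnj (u f q))) * v q)
         = complex_of_real (\<Sum>f\<in>F. w f * (cmod (\<Sum>p\<in>S. cnj (v p) * u f p))^2)"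
      by (rule qf_rank[OF S F])
    have "(\<Sum>f\<in>F. w f * (cmod (\<Sum>p\<in>S. cnj (v p) * u f p))^2) \<ge> 0"
      using w by (intro sum_nonneg) auto
    then show ?thesis unfolding e by simp
  qed
  show ?thesis
  unfolding density_on_def
proof (intro conjI allI impI)
  fix p q assume "p \<notin> S \<or> q \<notin> S"
  then show "(\<Sum>f\<in>F. complex_of_real (w f) * (u f p * cnj (u f q))) = 0" using z by auto
next
  fix p q
  show "(\<Sum>f\<in>F. complex_of_real (w f) * (u f q * cnj (u f p))) = cnj (\<Sum>f\<in>F. complex_of_real (w f) * (u f p * cnj (u f q)))"
    by (simp add: mult_ac)
next
  fix v :: "'i \<Rightarrow> complex"
  show "Im (\<Sum>p\<in>S. \<Sum>q\<in>S. cnj (v p) * (\<Sum>f\<in>F. complex_of_real (w f) * (u f p * cnj (u f q))) * v q) = 0"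
    using psd[of v] by blast
next
  fix v :: "'i \<Rightarrow> complex"
  show "Re (\<Sum>p\<in>S. \<Sum>q\<in>S. cnj (v p) * (\<Sum>f\<in>F. complex_of_real (w f) * (u f p * cnj (u f q))) * v q) \<ge> 0"
    using psd[of v] by blast
next
  have "(\<Sum>p\<in>S. \<Sum>f\<in>F. complex_of_real (w f) * (u f p * cnj (u f p)))
      = (\<Sum>f\<in>F. \<Sum>p\<in>S. complex_of_real (w f * (cmod (u f p))^2))"
    by (subst sum.swap) (simp only: of_real_mult complex_norm_square)
  also have "\<dots> = complex_of_real (\<Sum>f\<in>F. w f * (\<Sum>p\<in>S. (cmod (u f p))^2))"
    by (simp add: sum_distrib_left)
  finally show "(\<Sum>p\<in>S. \<Sum>f\<in>F. complex_of_real (w f) * (u f p * cnj (u f p))) = 1"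
    using tr by simp
qed
qed

theorem lemma2:
  fixes d :: nat and x :: "nat \<Rightarrow> real"
  assumes "d \<ge> 2"
    and "\<forall>i<d. x i \<ge> 0"
    and "\<exists>i<d. x i \<noteq> 0"
  shows "density_on ({..<d} \<times> {..<d}) (Iop d x) \<and> separable d (Iop d x)"
proof -
  define s where "s = (\<Sum>i<d. x i)"
  have xnn: "\<And>i. i < d \<Longrightarrow> x i \<ge> 0" using assms(2) by auto
  obtain i0 where i0: "i0 < d" "x i0 \<noteq> 0" using assms(3) by auto
  have "x i0 \<le> s" unfolding s_def using i0 xnn by (intro member_le_sum) auto
  then have spos: "s > 0" using i0 xnn[of i0] by linarith
  define \<psi> where "\<psi> f a = (if a < d then complex_of_real (sqrt (x a / s)) * \<i>^(f a) else 0)" for f :: "nat \<Rightarrow> nat" and a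
  define F where "F = PiE {..<d} (\<lambda>_. {..<4::nat})"
  have Ffin: "finite F" unfolding F_def by (simp add: finite_PiE)
  have Fcard: "card F = 4^d" unfolding F_def by (simp add: card_PiE)
  have nrm: "(\<Sum>a<d. (cmod (\<psi> f a))^2) = 1" for f
  proof -
    have "(\<Sum>a<d. (cmod (\<psi> f a))^2) = (\<Sum>a<d. x a / s)"
      using xnn spos by (intro sum.cong refl) (simp add: \<psi>_def norm_mult norm_power)
    also have "\<dots> = 1" using spos by (simp add: sum_divide_distrib[symmetric] s_def)
    finally show ?thesis .
  qed
  define \<Psi> where "\<Psi> f r = (case r of (a, b) \<Rightarrow> \<psi> f a * \<psi> f b)" for f r
  have rep: "Iop d x = (\<lambda>r q. \<Sum>f\<in>F. complex_of_real (1 / 4^d) * (\<Psi> f r * cnj (\<Psi> f q)))"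
  proof (intro ext)
    fix r q :: "nat \<times> nat"
    obtain a b where r: "r = (a, b)" by (cases r)
    obtain c e where q: "q = (c, e)" by (cases q)
    show "Iop d x r q = (\<Sum>f\<in>F. complex_of_real (1 / 4^d) * (\<Psi> f r * cnj (\<Psi> f q)))"
    proof (cases "a < d \<and> b < d \<and> c < d \<and> e < d")
      case False
      then show ?thesis unfolding r q Iop_entry \<Psi>_def \<psi>_def by auto
    next
      case True
      define K where "K = sqrt (x a / s) * sqrt (x b / s) * sqrt (x c / s) * sqrt (x e / s)"
      have "(\<Sum>f\<in>F. complex_of_real (1 / 4^d) * (\<Psi> f r * cnj (\<Psi> f q)))
          = (\<Sum>f\<in>F. complex_of_real (K / 4^d) * (\<i>^(f a) * \<i>^(f b) * cnj (\<i>^(f c)) * cnj (\<i>^(f e))))"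
        unfolding r q \<Psi>_def \<psi>_def K_def using True by (intro sum.cong refl) (simp add: mult_ac)
      also have "\<dots> = complex_of_real (K / 4^d) * (if (c = a \<and> e = b) \<or> (c = b \<and> e = a) then 4^d else 0)"
        unfolding F_def sum_distrib_left[symmetric] using True by (subst charsum) auto
      also have "\<dots> = complex_of_real (1 / s^2) *
         (if a < d \<and> b < d \<and> c < d \<and> e < d \<and> ((c = a \<and> e = b) \<or> (c = b \<and> e = a))
          then complex_of_real (x a * x b) else 0)"
      proof (cases "(c = a \<and> e = b) \<or> (c = b \<and> e = a)")
        case True2: True
        have xa: "x a \<ge> 0" "x b \<ge> 0" using True xnn by auto
        have "K = (sqrt (x a / s))^2 * (sqrt (x b / s))^2"
          using True2 unfolding K_def power2_eq_square by (auto simp: mult_ac)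
        also have "\<dots> = x a * x b / s^2" using xa spos by (simp add: power_divide power2_eq_square)
        finally have "K = x a * x b / s^2" .
        then show ?thesis using True True2 by (simp add: field_simps)
      next
        case False
        then show ?thesis by (simp only: if_False if_not_P[OF False] mult_zero_right) (simp add: False)
      qed
      finally show ?thesis unfolding r q Iop_entry s_def by simp
    qed
  qed
  have dens: "density_on ({..<d} \<times> {..<d}) (Iop d x)"
    unfolding rep
  proof (rule density_rank)
    show "\<forall>f p. p \<notin> {..<d} \<times> {..<d} \<longrightarrow> \<Psi> f p = 0"
      by (auto simp: \<Psi>_def \<psi>_def)
    have "(\<Sum>p\<in>{..<d} \<times> {..<d}. (cmod (\<Psi> f p))^2) = 1" for f
    proof -
      have "(\<Sum>p\<in>{..<d} \<times> {..<d}. (cmod (\<Psi> f p))^2) = (\<Sum>a<d. \<Sum>b<d. (cmod (\<psi> f a))^2 * (cmod (\<psi> f b))^2)"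
        by (simp add: sum.cartesian_product \<Psi>_def) (intro sum.cong refl, clarsimp simp: norm_mult power_mult_distrib)
      also have "\<dots> = (\<Sum>a<d. (cmod (\<psi> f a))^2) * (\<Sum>b<d. (cmod (\<psi> f b))^2)"
        by (simp add: sum_product)
      finally show ?thesis using nrm by simp
    qed
    then show "(\<Sum>f\<in>F. 1 / 4 ^ d * (\<Sum>p\<in>{..<d} \<times> {..<d}. (cmod (\<Psi> f p))\<^sup>2)) = 1"
      using Fcard by simp
  qed (auto simp: Ffin)
  have sep: "separable d (Iop d x)"
  proof -
    obtain h where h: "bij_betw h {0..<card F} F" using ex_bij_betw_nat_finite[OF Ffin] by blast
    define A where "A k = outer (\<psi> (h k)) (\<psi> (h k))" for k
    have dA: "density_on {..<d} (A k)" for k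
    proof -
      have "density_on {..<d} (\<lambda>p q. \<Sum>f\<in>{()}. complex_of_real 1 * (\<psi> (h k) p * cnj (\<psi> (h k) q)))"
        by (rule density_rank) (simp_all add: nrm, auto simp: \<psi>_def)
      then show ?thesis unfolding A_def outer_def by simp
    qed
    have "Iop d x = (\<lambda>r q. \<Sum>k<card F. complex_of_real (1 / 4^d) * tensor (A k) (A k) r q)"
    proof (intro ext)
      fix r q :: "nat \<times> nat"
      have t: "tensor (A k) (A k) r q = \<Psi> (h k) r * cnj (\<Psi> (h k) q)" for k
        by (cases r; cases q) (simp add: tensor_def A_def outer_def \<Psi>_def mult_ac)
      have "(\<Sum>k<card F. complex_of_real (1 / 4^d) * tensor (A k) (A k) r q)
          = (\<Sum>k\<in>{0..<card F}. complex_of_real (1 / 4^d) * (\<Psi> (h k) r * cnj (\<Psi> (h k) q)))"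
        by (simp add: t atLeast0LessThan)
      also have "\<dots> = (\<Sum>f\<in>F. complex_of_real (1 / 4^d) * (\<Psi> f r * cnj (\<Psi> f q)))"
        by (rule sum.reindex_bij_betw[OF h])
      finally show "Iop d x r q = (\<Sum>k<card F. complex_of_real (1 / 4^d) * tensor (A k) (A k) r q)"
        unfolding rep by simp
    qed
    then show ?thesis unfolding separable_def
      by (intro exI[of _ "card F"] exI[of _ "\<lambda>_. 1 / 4^d"] exI[of _ A] exI[of _ A]) (auto simp: dA Fcard)
  qed
  show ?thesis using dens sep by blast
qed

end
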